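(* Let $(L,[\cdot,\cdot],\alpha)$ be a Hom-Lie algebra over a field $F$ and let $\mu:L\to[0,1]$ be a fuzzy subset of $L$. Then the following are equivalent: (i) $\mu$ is a fuzzy Hom-Lie subalgebra of $L$; (ii) for every $t\in\mathrm{Im}(\mu)$ such that the strong upper level set $U(\mu^>,t)=\{x\in L:\mu(x)>t\}$ is nonempty, $U(\mu^>,t)$ is a Hom-Lie subalgebra of $L$.
   Context: A Hom-Lie algebra over $F$ is a triple $(L,[\cdot,\cdot],\alpha)$ with $L$ an $F$-vector space, $\alpha:L\to L$ linear and $[\cdot,\cdot]:L\times L\to L$ bilinear, such that $[x,y]=-[y,x]$ and $[\alpha(x),[y,z]]+[\alpha(y),[z,x]]+[\alpha(z),[x,y]]=0$ for all $x,y,z\in L$. A Hom-Lie subalgebra is a subspace $H$ with $\alpha(H)\subseteq H$ and $[x,y]\in H$ for all $x,y\in H$. A fuzzy subset of $L$ is a map $\mu:L\to[0,1]$. Writing $a\wedge b=\min\{a,b\}$, $\mu$ is a fuzzy Hom-Lie subalgebra if for all $x,y\in L$, $c\in F$: $\mu(x+y)\ge\mu(x)\wedge\mu(y)$, $\mu(cx)\ge\mu(x)$, $\mu([x,y])\ge\mu(x)\wedge\mu(y)$, and $\mu(\alpha(x))\ge\mu(x)$. *)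

theory Defs
  imports Complex_Main
begin

definition hom_lie_algebra ::
  "('a::field \<Rightarrow> 'v::ab_group_add \<Rightarrow> 'v) \<Rightarrow> ('v \<Rightarrow> 'v \<Rightarrow> 'v) \<Rightarrow> ('v \<Rightarrow> 'v) \<Rightarrow> bool" where
  "hom_lie_algebra scale br alpha \<longleftrightarrow>
     vector_space scale \<and>
     Vector_Spaces.linear scale scale alpha \<and>
     (\<forall>x y z. br (x + y) z = br x z + br y z) \<and>
     (\<forall>x y z. br x (y + z) = br x y + br x z) \<and>
     (\<forall>c x y. br (scale c x) y = scale c (br x y)) \<and>
     (\<forall>c x y. br x (scale c y) = scale c (br x y)) \<and>
     (\<forall>x y. br x y = - br y x) \<and>
     (\<forall>x y z. br (alpha x) (br y z) + br (alpha y) (br z x) + br (alpha z) (br x y) = 0)"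

definition hom_lie_subalgebra ::
  "('a::field \<Rightarrow> 'v::ab_group_add \<Rightarrow> 'v) \<Rightarrow> ('v \<Rightarrow> 'v \<Rightarrow> 'v) \<Rightarrow> ('v \<Rightarrow> 'v) \<Rightarrow> 'v set \<Rightarrow> bool" where
  "hom_lie_subalgebra scale br alpha H \<longleftrightarrow>
     module.subspace scale H \<and> alpha ` H \<subseteq> H \<and> (\<forall>x\<in>H. \<forall>y\<in>H. br x y \<in> H)"

definition fuzzy_subset :: "('v \<Rightarrow> real) \<Rightarrow> bool" where
  "fuzzy_subset mu \<longleftrightarrow> (\<forall>x. 0 \<le> mu x \<and> mu x \<le> 1)"

definition fuzzy_hom_lie_subalgebra ::
  "('a::field \<Rightarrow> 'v::ab_group_add \<Rightarrow> 'v) \<Rightarrow> ('v \<Rightarrow> 'v \<Rightarrow> 'v) \<Rightarrow> ('v \<Rightarrow> 'v) \<Rightarrow> ('v \<Rightarrow> real) \<Rightarrow> bool" where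
  "fuzzy_hom_lie_subalgebra scale br alpha mu \<longleftrightarrow>
     (\<forall>x y. mu (x + y) \<ge> min (mu x) (mu y)) \<and>
     (\<forall>c x. mu (scale c x) \<ge> mu x) \<and>
     (\<forall>x y. mu (br x y) \<ge> min (mu x) (mu y)) \<and>
     (\<forall>x. mu (alpha x) \<ge> mu x)"

definition strong_level_set :: "('v \<Rightarrow> real) \<Rightarrow> real \<Rightarrow> 'v set" where
  "strong_level_set mu t = {x. mu x > t}"

end

theory Submission
  imports Defs
begin

theorem theorem4p3:
  fixes scale :: "'a::field \<Rightarrow> 'v::ab_group_add \<Rightarrow> 'v"
    and br :: "'v \<Rightarrow> 'v \<Rightarrow> 'v" and alpha :: "'v \<Rightarrow> 'v" and mu :: "'v \<Rightarrow> real"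
  assumes "hom_lie_algebra scale br alpha"
    and "fuzzy_subset mu"
  shows "fuzzy_hom_lie_subalgebra scale br alpha mu \<longleftrightarrow>
    (\<forall>t \<in> range mu. strong_level_set mu t \<noteq> {} \<longrightarrow>
        hom_lie_subalgebra scale br alpha (strong_level_set mu t))"
proof
  have vs: "vector_space scale" using assms(1) unfolding hom_lie_algebra_def by blast
  then have md: "module scale" by (simp add: vector_space_def module_def)
  have z: "\<And>x. scale 0 x = 0" using module.scale_zero_left[OF md] by blast
  assume F: "fuzzy_hom_lie_subalgebra scale br alpha mu"
  show "\<forall>t \<in> range mu. strong_level_set mu t \<noteq> {} \<longrightarrow>
        hom_lie_subalgebra scale br alpha (strong_level_set mu t)"
  proof (intro ballI impI)
    fix t assume "strong_level_set mu t \<noteq> {}"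
    then obtain x where x: "mu x > t" by (auto simp: strong_level_set_def)
    have "mu (scale 0 x) \<ge> mu x" using F unfolding fuzzy_hom_lie_subalgebra_def by blast
    hence z0: "mu 0 > t" using x z by simp
    have A: "\<And>x y. min (mu x) (mu y) \<le> mu (x + y)" and S: "\<And>c x. mu x \<le> mu (scale c x)"
      and B: "\<And>x y. min (mu x) (mu y) \<le> mu (br x y)" and Al: "\<And>x. mu x \<le> mu (alpha x)"
      using F unfolding fuzzy_hom_lie_subalgebra_def by blast+
    have a1: "t < mu (x + y)" if "t < mu x" "t < mu y" for x y
      using A[of x y] that by linarith
    have a2: "t < mu (br x y)" if "t < mu x" "t < mu y" for x y
      using B[of x y] that by linarith
    have a3: "t < mu (scale c x)" if "t < mu x" for c x
      using S[of x c] that by linarith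
    have a4: "t < mu (alpha x)" if "t < mu x" for x
      using Al[of x] that by linarith
    show "hom_lie_subalgebra scale br alpha (strong_level_set mu t)"
      unfolding hom_lie_subalgebra_def module.subspace_def[OF md]
    proof (intro conjI ballI allI subsetI)
      show "0 \<in> strong_level_set mu t" using z0 by (simp add: strong_level_set_def)
    next
      fix u v assume "u \<in> strong_level_set mu t" "v \<in> strong_level_set mu t"
      then show "u + v \<in> strong_level_set mu t" "br u v \<in> strong_level_set mu t"
        using a1 a2 by (simp_all add: strong_level_set_def)
    next
      fix c u assume "u \<in> strong_level_set mu t"
      then show "scale c u \<in> strong_level_set mu t" using a3 by (simp add: strong_level_set_def)
    next
      fix w assume "w \<in> alpha ` strong_level_set mu t"
      then obtain u where "u \<in> strong_level_set mu t" "w = alpha u" by blast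
      then show "w \<in> strong_level_set mu t" using a4 by (simp add: strong_level_set_def)
    qed
  qed
next
  assume R: "\<forall>t \<in> range mu. strong_level_set mu t \<noteq> {} \<longrightarrow>
        hom_lie_subalgebra scale br alpha (strong_level_set mu t)"
  have vs: "vector_space scale" using assms(1) unfolding hom_lie_algebra_def by blast
  then have md: "module scale" by (simp add: vector_space_def module_def)
  have R': "\<And>t u. u \<in> strong_level_set mu t \<Longrightarrow> t \<in> range mu \<Longrightarrow>
     module.subspace scale (strong_level_set mu t) \<and> alpha ` strong_level_set mu t \<subseteq> strong_level_set mu t \<and>
     (\<forall>x\<in>strong_level_set mu t. \<forall>y\<in>strong_level_set mu t. br x y \<in> strong_level_set mu t)"
  proof -
    fix t u assume "u \<in> strong_level_set mu t" "t \<in> range mu"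
    then have "hom_lie_subalgebra scale br alpha (strong_level_set mu t)" using R by blast
    then show "module.subspace scale (strong_level_set mu t) \<and> alpha ` strong_level_set mu t \<subseteq> strong_level_set mu t \<and>
     (\<forall>x\<in>strong_level_set mu t. \<forall>y\<in>strong_level_set mu t. br x y \<in> strong_level_set mu t)"
      unfolding hom_lie_subalgebra_def by blast
  qed
  have sadd: "\<And>S x y. module.subspace scale S \<Longrightarrow> x \<in> S \<Longrightarrow> y \<in> S \<Longrightarrow> x + y \<in> S"
    by (simp add: module.subspace_def[OF md])
  have ssc: "\<And>S c x. module.subspace scale S \<Longrightarrow> x \<in> S \<Longrightarrow> scale c x \<in> S"
    by (simp add: module.subspace_def[OF md])
  show "fuzzy_hom_lie_subalgebra scale br alpha mu"
    unfolding fuzzy_hom_lie_subalgebra_def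
  proof (intro conjI allI)
    fix x y
    show "min (mu x) (mu y) \<le> mu (x + y)"
    proof (rule ccontr)
      assume "\<not> ?thesis"
      hence "x \<in> strong_level_set mu (mu (x+y))" "y \<in> strong_level_set mu (mu (x+y))"
        by (auto simp: strong_level_set_def)
      then have "x + y \<in> strong_level_set mu (mu (x+y))" using R'[of x "mu (x+y)"] sadd by blast
      thus False by (simp add: strong_level_set_def)
    qed
  next
    fix x y
    show "min (mu x) (mu y) \<le> mu (br x y)"
    proof (rule ccontr)
      assume "\<not> ?thesis"
      hence "x \<in> strong_level_set mu (mu (br x y))" "y \<in> strong_level_set mu (mu (br x y))"
        by (auto simp: strong_level_set_def)
      then have "br x y \<in> strong_level_set mu (mu (br x y))" using R'[of x "mu (br x y)"] by blast
      thus False by (simp add: strong_level_set_def)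
    qed
  next
    fix c x
    show "mu x \<le> mu (scale c x)"
    proof (rule ccontr)
      assume "\<not> ?thesis"
      hence "x \<in> strong_level_set mu (mu (scale c x))"
        by (auto simp: strong_level_set_def)
      then have "scale c x \<in> strong_level_set mu (mu (scale c x))" using R'[of x "mu (scale c x)"] ssc by blast
      thus False by (simp add: strong_level_set_def)
    qed
  next
    fix x
    show "mu x \<le> mu (alpha x)"
    proof (rule ccontr)
      assume "\<not> ?thesis"
      hence "x \<in> strong_level_set mu (mu (alpha x))"
        by (auto simp: strong_level_set_def)
      then have "alpha x \<in> strong_level_set mu (mu (alpha x))" using R'[of x "mu (alpha x)"] by blast
      thus False by (simp add: strong_level_set_def)
    qed
  qed
qed

end
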